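(* Let $X$ be a compact topological space, let $D\subseteq X$, let $\overline{D}$ be the closure of $D$ in $X$, and put $\partial D:=\overline{D}\setminus D$. Let $Y$ be a Hausdorff topological space and let $f\colon\overline{D}\to Y$ be a continuous map such that $f(D)$ is open in $Y$. For each $y\in Y\setminus f(\partial D)$, let $E_y$ denote the connected component of $y$ in $Y\setminus f(\partial D)$. Then $$f(\overline{D})\subseteq Y\setminus \bigcup_{y\in Y\setminus f(\overline{D})}E_y .$$
   Context: Note that $\partial D$ is defined as $\overline{D}\setminus D$; complements are taken in $Y$. *)

theory Defs
  imports "HOL-Analysis.Analysis"
begin

end

theory Submission
  imports Defs
begin

theorem mainTheorem2:
  fixes X :: "'a topology" and Y :: "'b topology" and D :: "'a set" and f :: "'a \<Rightarrow> 'b"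
  assumes "compact_space X"
    and "D \<subseteq> topspace X"
    and "Hausdorff_space Y"
    and "continuous_map (subtopology X (X closure_of D)) Y f"
    and "openin Y (f ` D)"
  shows "f ` (X closure_of D) \<subseteq>
    topspace Y - (\<Union>y \<in> topspace Y - f ` (X closure_of D).
       connected_component_of_set
         (subtopology Y (topspace Y - f ` ((X closure_of D) - D))) y)"
proof -
  let ?cl = "X closure_of D"
  let ?K = "f ` ?cl"
  have DK: "D \<subseteq> ?cl" using assms(2) closure_of_subset by blast
  have ctop: "compactin X ?cl"
    using assms(1) closedin_compact_space closedin_closure_of by blast
  have "compactin (subtopology X ?cl) ?cl"
    using ctop by (simp add: compactin_subtopology)
  hence Kc: "compactin Y ?K" using image_compactin assms(4) by blast
  hence Kcl: "closedin Y ?K" using compactin_imp_closedin assms(3) by blast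
  have KY: "?K \<subseteq> topspace Y" using Kc compactin_subset_topspace by blast
  have "?K \<inter> C = {}" if y: "y \<in> topspace Y - ?K"
    and C: "C = connected_component_of_set (subtopology Y (topspace Y - f ` (?cl - D))) y" for y C
  proof -
    have cc: "connectedin (subtopology Y (topspace Y - f ` (?cl - D))) C"
      unfolding C by (rule connectedin_connected_component_of)
    hence cY: "connectedin Y C" and CS: "C \<subseteq> topspace Y - f ` (?cl - D)"
      by (auto simp: connectedin_subtopology)
    have yC: "y \<in> C"
      using C y by (auto simp: connected_component_of_refl)
    have eq: "C \<inter> f ` D = C \<inter> ?K" using CS DK by auto
    have CY: "C \<subseteq> topspace Y" using CS by auto
    have o: "openin (subtopology Y C) (C \<inter> f ` D)"
      using assms(5) by (metis inf_commute openin_subtopology_Int2 inf.commute openin_subtopology)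
    have c: "closedin (subtopology Y C) (C \<inter> ?K)"
      using Kcl by (metis closedin_subtopology inf_commute)
    have conn: "connected_space (subtopology Y C)" using cY by (simp add: connectedin_def)
    have "C \<inter> ?K = {} \<or> C \<inter> ?K = topspace (subtopology Y C)"
      using conn o c eq unfolding connected_space_clopen_in by metis
    moreover have "y \<notin> C \<inter> ?K" using y by auto
    moreover have "y \<in> topspace (subtopology Y C)" using yC CY by auto
    ultimately show ?thesis by auto
  qed
  thus ?thesis using KY by blast
qed

end
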